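(* Let $\alpha>0$ and let $\mathfrak f(t)=\sum_{n\ge0}\widehat{\mathfrak f}(n)e^{int}$ with $\sum_{n\ge0}n^\alpha|\widehat{\mathfrak f}(n)|<\infty$. Then $\mathfrak f\in A_+^\alpha(\mathbb{T})$, i.e. $\sum_{n\ge0}k^{\alpha+1}(n)|W_+^\alpha\widehat{\mathfrak f}(n)|<\infty$.
   Context: For $\gamma\in\mathbb{R}$, $k^\gamma(0)=1$, $k^\gamma(n)=\frac{\gamma(\gamma+1)\cdots(\gamma+n-1)}{n!}$ for $n\ge1$. For a sequence $f$ on $\mathbb{Z}$ (extended by $0$ for $n<0$ when given on $\mathbb{N}_0$): $W_+f(n)=f(n)-f(n+1)$, $W_+^m$ its powers; for $\alpha>0$, $W_+^{-\alpha}f(n)=\sum_{j\ge n}k^\alpha(j-n)f(j)$ and $W_+^\alpha f=W_+^mW_+^{-(m-\alpha)}f$ with $m=[\alpha]+1$. $A_+^\alpha(\mathbb{T})$ is the space of continuous $2\pi$-periodic functions $\mathfrak f(t)=\sum_{n\ge0}\widehat{\mathfrak f}(n)e^{int}$ with norm $\sum_{n\ge0}k^{\alpha+1}(n)|W_+^\alpha\widehat{\mathfrak f}(n)|<\infty$. *)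

theory Defs
  imports "HOL-Analysis.Analysis"
begin

definition kker :: "real \<Rightarrow> nat \<Rightarrow> real" where
  "kker \<gamma> n = pochhammer \<gamma> n / fact n"

definition Wdiff :: "(nat \<Rightarrow> complex) \<Rightarrow> nat \<Rightarrow> complex" where
  "Wdiff f n = f n - f (Suc n)"

text \<open>Weyl sum W_+^{-alpha} f(n) = sum_{j >= n} k^alpha(j-n) f(j).\<close>
definition Wsum :: "real \<Rightarrow> (nat \<Rightarrow> complex) \<Rightarrow> nat \<Rightarrow> complex" where
  "Wsum \<alpha> f n = (\<Sum>i. complex_of_real (kker \<alpha> i) * f (i + n))"

definition Wfrac :: "real \<Rightarrow> (nat \<Rightarrow> complex) \<Rightarrow> nat \<Rightarrow> complex" where
  "Wfrac \<alpha> f = (let m = nat \<lfloor>\<alpha>\<rfloor> + 1 in (Wdiff ^^ m) (Wsum (real m - \<alpha>) f))"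

text \<open>Membership of f(t) = sum_n c(n) e^{int} in A_+^alpha(T), expressed via its coefficients c.\<close>
definition in_A_plus :: "real \<Rightarrow> (nat \<Rightarrow> complex) \<Rightarrow> bool" where
  "in_A_plus \<alpha> c \<longleftrightarrow> summable (\<lambda>n. kker (\<alpha> + 1) n * norm (Wfrac \<alpha> c n))"

end

theory Submission imports Defs begin

lemma kker_0[simp]: "kker g 0 = 1" by (simp add: kker_def)

lemma kker_Suc: "kker g (Suc n) = kker g n * (g + real n) / (real n + 1)"
  by (simp add: kker_def pochhammer_rec' field_simps)

lemma kker_diff: "kker g (Suc i) - kker g i = kker (g - 1) (Suc i)"
proof -
  have "pochhammer (g - 1) (Suc i) = (g - 1) * pochhammer g i"
    by (simp add: pochhammer_rec)
  then have a: "kker (g - 1) (Suc i) = (g - 1) * pochhammer g i / ((real i + 1) * fact i)"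
    by (simp add: kker_def algebra_simps)
  have b: "kker g (Suc i) = (g + real i) * pochhammer g i / ((real i + 1) * fact i)"
    by (simp add: kker_def pochhammer_rec' algebra_simps)
  have c: "kker g i = (real i + 1) * pochhammer g i / ((real i + 1) * fact i)"
    by (simp add: kker_def)
  show ?thesis unfolding a b c by (simp add: diff_divide_distrib[symmetric] algebra_simps)
qed

lemma kker_partial: "(\<Sum>j<Suc J. kker g j) = kker (g + 1) J"
proof (induction J)
  case 0 then show ?case by simp
next
  case (Suc J)
  have "kker (g+1) (Suc J) - kker (g+1) J = kker g (Suc J)"
    using kker_diff[of "g+1" J] by simp
  then show ?case using Suc by simp
qed

lemma kker_bounded:
  assumes "g \<le> 1" shows "\<exists>B. \<forall>J. \<bar>kker g J\<bar> \<le> B"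
proof -
  define N where "N = nat \<lceil>-g\<rceil>"
  define B where "B = (\<Sum>J\<le>N. \<bar>kker g J\<bar>)"
  have "\<bar>kker g J\<bar> \<le> B" for J
  proof (induction J)
    case 0 then show ?case unfolding B_def
      using member_le_sum[of 0 "{..N}" "\<lambda>J. \<bar>kker g J\<bar>"] by simp
  next
    case (Suc J)
    show ?case
    proof (cases "Suc J \<le> N")
      case True then show ?thesis unfolding B_def
        using member_le_sum[of "Suc J" "{..N}" "\<lambda>J. \<bar>kker g J\<bar>"] by simp
    next
      case False
      then have "real J \<ge> -g" unfolding N_def by linarith
      then have f: "0 \<le> g + real J" "g + real J \<le> real J + 1" using assms by auto
      have "\<bar>kker g (Suc J)\<bar> = \<bar>kker g J\<bar> * ((g + real J) / (real J + 1))"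
        using f by (simp add: kker_Suc abs_mult)
      also have "\<dots> \<le> \<bar>kker g J\<bar> * 1"
        using f by (intro mult_left_mono) auto
      finally show ?thesis using Suc by simp
    qed
  qed
  then show ?thesis by blast
qed

lemma kker_nonneg: "g \<ge> 0 \<Longrightarrow> kker g n \<ge> 0"
  by (induction n) (auto simp: kker_Suc)

lemma kker_mono_pos: "g \<ge> 1 \<Longrightarrow> kker g n \<le> kker g (n + j)"
proof (induction j)
  case 0 then show ?case by simp
next
  case (Suc j)
  have "kker g (n+j) \<le> kker g (n + j) * ((g + real (n+j)) / (real (n+j) + 1))"
    using Suc.prems kker_nonneg[of g "n+j"] by (intro mult_le_cancel_left1[THEN iffD2] | simp add: field_simps)+
  then show ?case using Suc by (simp add: kker_Suc)
qed

lemma summable_ker: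
  assumes "\<And>i. \<bar>b i\<bar> \<le> B" "summable (\<lambda>i. norm (c i))"
  shows "summable (\<lambda>i. norm (complex_of_real (b i) * c (i + n)))"
proof (rule summable_comparison_test')
  show "summable (\<lambda>i. B * norm (c (i + n)))"
    using summable_ignore_initial_segment[OF assms(2), of n] by (intro summable_mult) simp
  show "norm (norm (complex_of_real (b i) * c (i + n))) \<le> B * norm (c (i + n))" for i
    using assms(1)[of i] by (simp add: norm_mult mult_right_mono)
qed

lemma Wdiff_Wsum:
  assumes "g \<le> 1" "summable (\<lambda>i. norm (c i))"
  shows "Wdiff (Wsum g c) = Wsum (g - 1) c"
proof (rule ext)
  fix n
  obtain B where B: "\<And>J. \<bar>kker g J\<bar> \<le> B" using kker_bounded[OF assms(1)] by blast
  have "g - 1 \<le> 1" using assms(1) by simp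
  then obtain B' where B': "\<And>J. \<bar>kker (g-1) J\<bar> \<le> B'" using kker_bounded by blast
  define f where "f = (\<lambda>m i. complex_of_real (kker g i) * c (i + m))"
  define h where "h = (\<lambda>i. complex_of_real (kker (g-1) i) * c (i + n))"
  have s1: "summable (f m)" for m unfolding f_def by (rule summable_norm_cancel[OF summable_ker[OF B assms(2)]])
  have s2: "summable h" unfolding h_def by (rule summable_norm_cancel[OF summable_ker[OF B' assms(2)]])
  have W: "Wsum g c m = suminf (f m)" for m by (simp add: Wsum_def f_def)
  have W': "Wsum (g-1) c n = suminf h" by (simp add: Wsum_def h_def)
  have e1: "suminf (f n) = c n + (\<Sum>i. f n (Suc i))"
    using suminf_split_head[OF s1[of n]] by (simp add: f_def)
  have e2: "suminf (f (Suc n)) = (\<Sum>i. f n (Suc i) - h (Suc i))"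
  proof -
    have "f n (Suc i) - h (Suc i) = f (Suc n) i" for i
    proof -
      have "complex_of_real (kker g (Suc i)) - complex_of_real (kker (g-1) (Suc i)) = complex_of_real (kker g i)"
      proof -
        have r: "kker g (Suc i) - kker (g-1) (Suc i) = kker g i" using kker_diff[of g i] by linarith
        show ?thesis using arg_cong[OF r, of complex_of_real] by (simp only: of_real_diff)
      qed
      moreover have "Suc i + n = i + Suc n" by simp
      ultimately show ?thesis unfolding f_def h_def by (metis left_diff_distrib)
    qed
    then show ?thesis by simp
  qed
  have e3: "suminf h = c n + (\<Sum>i. h (Suc i))"
    using suminf_split_head[OF s2] by (simp add: h_def)
  have s3: "summable (\<lambda>i. f n (Suc i))" using s1[of n] by (subst summable_Suc_iff)
  have s4: "summable (\<lambda>i. h (Suc i))" using s2 by (subst summable_Suc_iff)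
  show "Wdiff (Wsum g c) n = Wsum (g - 1) c n"
    unfolding Wdiff_def W W' e1 e2 e3 by (simp add: suminf_diff[OF s3 s4, symmetric])
qed

lemma Wpow:
  assumes "b \<le> 1" "summable (\<lambda>i. norm (c i))"
  shows "(Wdiff ^^ k) (Wsum b c) = Wsum (b - real k) c"
proof (induction k)
  case 0 then show ?case by simp
next
  case (Suc k)
  have "b - real k \<le> 1" using assms by simp
  then show ?case using Suc Wdiff_Wsum[OF _ assms(2), of "b - real k"] by (simp add: algebra_simps)
qed

lemma Wfrac_eq:
  assumes "\<alpha> > 0" "summable (\<lambda>i. norm (c i))"
  shows "Wfrac \<alpha> c = Wsum (-\<alpha>) c"
proof -
  let ?m = "nat \<lfloor>\<alpha>\<rfloor> + 1"
  have "real ?m - \<alpha> \<le> 1" using assms(1) by linarith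
  then have "(Wdiff ^^ ?m) (Wsum (real ?m - \<alpha>) c) = Wsum (real ?m - \<alpha> - real ?m) c"
    by (rule Wpow[OF _ assms(2)])
  then show ?thesis unfolding Wfrac_def Let_def by simp
qed

lemma kker_neg_summable:
  assumes "\<alpha> > 0"
  shows "summable (\<lambda>j. \<bar>kker (-\<alpha>) j\<bar>)"
proof -
  define k where "k = kker (-\<alpha>)"
  define m0 where "m0 = nat \<lceil>\<alpha>\<rceil>"
  define \<sigma> :: real where "\<sigma> = (if k m0 \<ge> 0 then 1 else -1)"
  have sg: "\<sigma> * k j \<ge> 0" if "j \<ge> m0" for j
    using that
  proof (induction j rule: dec_induct)
    case base then show ?case by (simp add: \<sigma>_def)
  next
    case (step j)
    have "real j \<ge> \<alpha>" using step.hyps(1) unfolding m0_def by linarith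
    then have "(-\<alpha> + real j) / (real j + 1) \<ge> 0" by simp
    moreover have "\<sigma> * k (Suc j) = (\<sigma> * k j) * ((-\<alpha> + real j) / (real j + 1))"
      by (simp add: k_def kker_Suc)
    ultimately show ?case using step.IH by (simp only:) (rule mult_nonneg_nonneg)
  qed
  define d where "d j = \<bar>k j\<bar> - \<sigma> * k j" for j
  have d0: "d j = 0" if "j \<ge> m0" for j
    using sg[OF that] unfolding d_def \<sigma>_def by (auto split: if_splits)
  have dnn: "d j \<ge> 0" for j unfolding d_def \<sigma>_def by (auto simp: abs_if)
  have dsum: "(\<Sum>j<J. d j) \<le> (\<Sum>j<m0. d j)" for J
  proof (induction J)
    case 0 then show ?case using dnn by (simp add: sum_nonneg)
  next
    case (Suc J)
    show ?case
    proof (cases "J < m0")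
      case True
      then show ?thesis using dnn by (intro sum_mono2) auto
    next
      case False then show ?thesis using Suc d0[of J] by simp
    qed
  qed
  have "1 - \<alpha> \<le> 1" using assms by simp
  then obtain B where B: "\<And>J. \<bar>kker (1 - \<alpha>) J\<bar> \<le> B" using kker_bounded by blast
  have ps: "\<bar>\<Sum>j<J. k j\<bar> \<le> B" for J
  proof (cases J)
    case 0 then show ?thesis using B[of 0] by simp
  next
    case (Suc J')
    have "(\<Sum>j<Suc J'. k j) = kker (1 - \<alpha>) J'"
      using kker_partial[of "-\<alpha>" J'] by (simp add: k_def)
    then show ?thesis using Suc B[of J'] by simp
  qed
  have "(\<Sum>j<J. \<bar>k j\<bar>) \<le> (\<Sum>j<m0. d j) + B" for J
  proof -
    have "(\<Sum>j<J. \<bar>k j\<bar>) = (\<Sum>j<J. d j) + \<sigma> * (\<Sum>j<J. k j)"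
      by (simp add: d_def sum.distrib sum_distrib_left sum_subtractf)
    also have "\<sigma> * (\<Sum>j<J. k j) \<le> B"
      using ps[of J] unfolding \<sigma>_def by auto
    finally show ?thesis using dsum[of J] by linarith
  qed
  then show ?thesis unfolding k_def[symmetric]
    by (intro summableI_nonneg_bounded) auto
qed

lemma kker_growth:
  assumes "\<alpha> \<ge> 0" "N \<ge> 1"
  shows "kker (\<alpha> + 1) N \<le> (1 + \<alpha>) * real N powr \<alpha>"
  using assms(2)
proof (induction N rule: dec_induct)
  case base
  have "kker (\<alpha> + 1) 1 = \<alpha> + 1" using kker_Suc[of "\<alpha>+1" 0] by simp
  then show ?case by simp
next
  case (step N)
  have N: "real N \<ge> 1" using step.hyps(1) by simp
  have l: "ln ((real N + 1) / real N) \<ge> 1 / (real N + 1)"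
  proof -
    have "ln (real N / (real N + 1)) \<le> real N / (real N + 1) - 1"
      using N by (intro ln_le_minus_one) auto
    also have "\<dots> = - (1 / (real N + 1))" using N by (simp add: field_simps)
    finally have "ln (real N / (real N + 1)) \<le> - (1 / (real N + 1))" .
    moreover have "ln ((real N + 1) / real N) = - ln (real N / (real N + 1))"
      using N by (simp add: ln_div)
    ultimately show ?thesis by linarith
  qed
  have p: "((real N + 1) / real N) powr \<alpha> \<ge> 1 + \<alpha> / (real N + 1)"
  proof -
    have "((real N + 1) / real N) powr \<alpha> = exp (\<alpha> * ln ((real N + 1) / real N))"
      using N by (simp add: powr_def)
    also have "\<dots> \<ge> 1 + \<alpha> * ln ((real N + 1) / real N)" by (rule exp_ge_add_one_self)
    finally show ?thesis using mult_left_mono[OF l assms(1)] by simp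
  qed
  have pw: "real (Suc N) powr \<alpha> = real N powr \<alpha> * ((real N + 1) / real N) powr \<alpha>"
    using N by (simp add: powr_divide add.commute)
  have "kker (\<alpha> + 1) (Suc N) = kker (\<alpha> + 1) N * (1 + \<alpha> / (real N + 1))"
    using N by (simp add: kker_Suc field_simps)
  also have "\<dots> \<le> ((1 + \<alpha>) * real N powr \<alpha>) * (1 + \<alpha> / (real N + 1))"
    using step.IH assms(1) N by (intro mult_right_mono) auto
  also have "\<dots> \<le> ((1 + \<alpha>) * real N powr \<alpha>) * ((real N + 1) / real N) powr \<alpha>"
    using p assms(1) by (intro mult_left_mono) auto
  also have "\<dots> = (1 + \<alpha>) * real (Suc N) powr \<alpha>" using pw by simp
  finally show ?case .
qed

theorem mainTheorem10:
  fixes \<alpha> :: real and c :: "nat \<Rightarrow> complex"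
  assumes "\<alpha> > 0"
    and "summable (\<lambda>n. real n powr \<alpha> * norm (c n))"
  shows "in_A_plus \<alpha> c"
proof -
  define K where "K = kker (\<alpha> + 1)"
  define a where "a = kker (-\<alpha>)"
  have Knn: "K n \<ge> 0" for n unfolding K_def using assms(1) by (intro kker_nonneg) simp
  have Kmono: "K n \<le> K (n + j)" for n j unfolding K_def using assms(1) by (intro kker_mono_pos) simp
  have cs: "summable (\<lambda>n. norm (c n))"
  proof (rule summable_comparison_test'[OF assms(2), of 1])
    fix n :: nat assume "n \<ge> 1"
    then have "1 \<le> real n powr \<alpha>" using assms(1) by (intro ge_one_powr_ge_zero) auto
    then show "norm (norm (c n)) \<le> real n powr \<alpha> * norm (c n)"
      using mult_right_mono[of 1 "real n powr \<alpha>" "norm (c n)"] by simp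
  qed
  have KS: "summable (\<lambda>N. K N * norm (c N))"
  proof (rule summable_comparison_test'[of "\<lambda>N. (1 + \<alpha>) * (real N powr \<alpha> * norm (c N))" 1])
    show "summable (\<lambda>N. (1 + \<alpha>) * (real N powr \<alpha> * norm (c N)))"
      using assms(2) by (rule summable_mult)
    fix N :: nat assume "N \<ge> 1"
    then have KN: "K N \<le> (1 + \<alpha>) * real N powr \<alpha>" unfolding K_def using assms(1) by (intro kker_growth) auto
    show "norm (K N * norm (c N)) \<le> (1 + \<alpha>) * (real N powr \<alpha> * norm (c N))"
      using Knn[of N] mult_right_mono[OF KN norm_ge_zero[of "c N"]] by (simp add: abs_mult mult.assoc)
  qed
  define S where "S = (\<Sum>N. K N * norm (c N))"
  have as: "summable (\<lambda>j. \<bar>a j\<bar>)" unfolding a_def using kker_neg_summable[OF assms(1)] .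
  define A where "A = (\<Sum>j. \<bar>a j\<bar>)"
  have "-\<alpha> \<le> 1" using assms(1) by simp
  then obtain B where B: "\<And>J. \<bar>a J\<bar> \<le> B" unfolding a_def using kker_bounded by blast
  define T where "T n = (\<Sum>j. \<bar>a j\<bar> * norm (c (j + n)))" for n
  have Ts: "summable (\<lambda>j. \<bar>a j\<bar> * norm (c (j + n)))" for n
    using summable_ker[OF B cs, where n=n] by (simp add: norm_mult)
  have WT: "norm (Wfrac \<alpha> c n) \<le> T n" for n
  proof -
    have "norm (Wfrac \<alpha> c n) = norm (\<Sum>j. complex_of_real (a j) * c (j + n))"
      by (simp add: Wfrac_eq[OF assms(1) cs] Wsum_def a_def)
    also have "\<dots> \<le> (\<Sum>j. norm (complex_of_real (a j) * c (j + n)))"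
      by (rule summable_norm) (rule summable_ker[OF B cs])
    also have "\<dots> = T n" by (simp add: T_def norm_mult)
    finally show ?thesis .
  qed
  have KTs: "summable (\<lambda>n. K n * T n)"
  proof (rule summableI_nonneg_bounded)
    show "0 \<le> K n * T n" for n
      using Knn[of n] by (intro mult_nonneg_nonneg) (auto simp: T_def intro!: suminf_nonneg Ts)
    fix L
    have "(\<Sum>n<L. K n * T n) = (\<Sum>n<L. \<Sum>j. K n * (\<bar>a j\<bar> * norm (c (j + n))))"
      unfolding T_def by (intro sum.cong refl suminf_mult[symmetric] Ts)
    also have "\<dots> = (\<Sum>j. \<Sum>n<L. K n * (\<bar>a j\<bar> * norm (c (j + n))))"
      by (rule suminf_sum[symmetric]) (intro summable_mult Ts)
    also have "\<dots> \<le> (\<Sum>j. \<bar>a j\<bar> * S)"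
    proof (rule suminf_le)
      show "summable (\<lambda>j. \<bar>a j\<bar> * S)" using as by (rule summable_mult2)
      show "summable (\<lambda>j. \<Sum>n<L. K n * (\<bar>a j\<bar> * norm (c (j + n))))"
        by (intro summable_sum summable_mult Ts)
      fix j
      have "(\<Sum>n<L. K n * (\<bar>a j\<bar> * norm (c (j + n)))) = \<bar>a j\<bar> * (\<Sum>n<L. K n * norm (c (n + j)))"
        by (simp add: sum_distrib_left algebra_simps)
      also have "\<dots> \<le> \<bar>a j\<bar> * (\<Sum>n<L. K (n + j) * norm (c (n + j)))"
        using Kmono by (intro mult_left_mono sum_mono mult_right_mono) auto
      also have "(\<Sum>n<L. K (n + j) * norm (c (n + j))) = (\<Sum>N\<in>{j..<L+j}. K N * norm (c N))"
        using sum.shift_bounds_nat_ivl[of "\<lambda>N. K N * norm (c N)" 0 j L] by (simp add: atLeast0LessThan)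
      also have "\<dots> \<le> S" unfolding S_def
        using Knn by (intro sum_le_suminf KS) auto
      finally show "(\<Sum>n<L. K n * (\<bar>a j\<bar> * norm (c (j + n)))) \<le> \<bar>a j\<bar> * S"
        by (simp add: mult_left_mono)
    qed
    also have "\<dots> = A * S" unfolding A_def by (rule suminf_mult2[symmetric]) (rule as)
    finally show "(\<Sum>n<L. K n * T n) \<le> A * S" .
  qed
  show ?thesis unfolding in_A_plus_def
  proof (rule summable_comparison_test'[OF KTs, of 0])
    fix n :: nat
    show "norm (kker (\<alpha> + 1) n * norm (Wfrac \<alpha> c n)) \<le> K n * T n"
      using Knn[of n] WT[of n] by (simp add: K_def[symmetric] abs_mult mult_left_mono)
  qed
qed

end
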